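(* Let $(\mathcal C,\otimes,I)$ be a monoidal category and let $G$ be a strong endofunctor on $\mathcal C$ (with strength $\tau^G$) such that the algebraically free monad $G^*$ exists and is strongly generated; regard $G^*$ as a strong monad with strength $\widetilde\tau$. Let $\langle A,\ g: GA\to A,\ m: A\otimes A\to A,\ u: I\to A\rangle$ be a $G$-monoid. Then $\langle A,\ \llbracket g\rrbracket : G^*A\to A,\ m,\ u\rangle$ is an Eilenberg--Moore $G^*$-monoid.
   Context: Structural isomorphisms of the monoidal category are written $\cong$. A monoid is $\langle A, m: A\otimes A\to A, u: I\to A\rangle$ satisfying the usual unit and associativity laws. A strength for an endofunctor $G$ is a natural transformation $\tau^G_{A,B}: GA\otimes B\to G(A\otimes B)$ compatible with the unitor and associator; a strong monad $M$ is a monad with a strength $\tau$ additionally satisfying $\tau\circ(\eta\otimes \mathrm{id})=\eta$ and $\tau\circ(\mu\otimes\mathrm{id})=\mu\circ M\tau\circ\tau$. A $G$-algebra is a pair $\langle C, c: GC\to C\rangle$; morphisms $h$ satisfy $d\circ Gh = h\circ c$. The algebraically free monad $G^*$ exists if the forgetful functor from $G$-algebras to $\mathcal C$ has a left adjoint; the free algebra on $X$ is $\langle G^*X, \mathsf{cons}_X: GG^*X\to G^*X\rangle$ with unit $\eta^{\mathcal F}_X: X\to G^*X$. For a $G$-algebra $g: GA\to A$, $\llbracket g\rrbracket: G^*A\to A$ denotes the unique $G$-algebra morphism $\langle G^*A,\mathsf{cons}\rangle\to\langle A,g\rangle$ with $\llbracket g\rrbracket\circ\eta^{\mathcal F}_A=\mathrm{id}_A$.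 $G^*$ is strongly generated if for every morphism $f: A\otimes B\to C$ and every $G$-algebra $\langle C,c\rangle$ there is a unique $\widehat f: G^*A\otimes B\to C$ with $\widehat f\circ(\eta^{\mathcal F}\otimes\mathrm{id})=f$ and $\widehat f\circ(\mathsf{cons}\otimes \mathrm{id}) = c\circ G\widehat f\circ\tau^G$. In that case $G^*$ is a strong monad with strength $\widetilde\tau_{A,B}=\widehat{f}$ for $f=\eta^{\mathcal F}_{A\otimes B}$ and the algebra $\langle G^*(A\otimes B),\mathsf{cons}\rangle$. A $G$-monoid is a tuple $\langle A, g: GA\to A, m, u\rangle$ where $\langle A,m,u\rangle$ is a monoid and $m\circ(g\otimes\mathrm{id}_A) = g\circ Gm\circ\tau^G_{A,A}$. For a strong monad $M$ with strength $\tau$, an Eilenberg--Moore $M$-monoid is a tuple $\langle A, a: MA\to A, m, u\rangle$ such that $\langle A,a\rangle$ is an Eilenberg--Moore algebra ($a\circ Ma=a\circ\mu_A$, $a\circ\eta_A=\mathrm{id}$), $\langle A,m,u\rangle$ is a monoid, and $m\circ(a\otimes \mathrm{id}_A) = a\circ Mm\circ \tau_{A,A}$. *)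

theory Defs
  imports Main
begin

text \<open>A monoidal category. Objects are the elements of type 'o, arrows are the elements
  of type 'a. mc_comp C g f is the composite g after f (meaningful when mc_cod f = mc_dom g).\<close>

record ('o, 'a) moncat =
  mc_dom :: "'a \<Rightarrow> 'o"
  mc_cod :: "'a \<Rightarrow> 'o"
  mc_comp :: "'a \<Rightarrow> 'a \<Rightarrow> 'a"
  mc_id :: "'o \<Rightarrow> 'a"
  mc_ten :: "'o \<Rightarrow> 'o \<Rightarrow> 'o"
  mc_tenm :: "'a \<Rightarrow> 'a \<Rightarrow> 'a"
  mc_unit :: "'o"
  mc_assoc :: "'o \<Rightarrow> 'o \<Rightarrow> 'o \<Rightarrow> 'a"
  mc_lunit :: "'o \<Rightarrow> 'a"
  mc_runit :: "'o \<Rightarrow> 'a"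

definition hom :: "('o, 'a) moncat \<Rightarrow> 'a \<Rightarrow> 'o \<Rightarrow> 'o \<Rightarrow> bool" where
  "hom C f X Y \<longleftrightarrow> mc_dom C f = X \<and> mc_cod C f = Y"

definition category :: "('o, 'a) moncat \<Rightarrow> bool" where
  "category C \<longleftrightarrow>
    (\<forall>X. hom C (mc_id C X) X X) \<and>
    (\<forall>f g. mc_cod C f = mc_dom C g \<longrightarrow> hom C (mc_comp C g f) (mc_dom C f) (mc_cod C g)) \<and>
    (\<forall>f. mc_comp C f (mc_id C (mc_dom C f)) = f \<and> mc_comp C (mc_id C (mc_cod C f)) f = f) \<and>
    (\<forall>f g h. mc_cod C f = mc_dom C g \<and> mc_cod C g = mc_dom C h \<longrightarrow>
        mc_comp C h (mc_comp C g f) = mc_comp C (mc_comp C h g) f)"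

definition iso :: "('o, 'a) moncat \<Rightarrow> 'a \<Rightarrow> bool" where
  "iso C f \<longleftrightarrow> (\<exists>g. hom C g (mc_cod C f) (mc_dom C f) \<and>
      mc_comp C g f = mc_id C (mc_dom C f) \<and> mc_comp C f g = mc_id C (mc_cod C f))"

definition monoidal_category :: "('o, 'a) moncat \<Rightarrow> bool" where
  "monoidal_category C \<longleftrightarrow> category C \<and>
    \<comment> \<open>tensor is a bifunctor\<close>
    (\<forall>f g. hom C (mc_tenm C f g) (mc_ten C (mc_dom C f) (mc_dom C g)) (mc_ten C (mc_cod C f) (mc_cod C g))) \<and>
    (\<forall>X Y. mc_tenm C (mc_id C X) (mc_id C Y) = mc_id C (mc_ten C X Y)) \<and>
    (\<forall>f f' g g'. mc_cod C f = mc_dom C f' \<and> mc_cod C g = mc_dom C g' \<longrightarrow>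
        mc_tenm C (mc_comp C f' f) (mc_comp C g' g) = mc_comp C (mc_tenm C f' g') (mc_tenm C f g)) \<and>
    \<comment> \<open>associator: natural isomorphism (X\<otimes>Y)\<otimes>Z \<rightarrow> X\<otimes>(Y\<otimes>Z)\<close>
    (\<forall>X Y Z. hom C (mc_assoc C X Y Z) (mc_ten C (mc_ten C X Y) Z) (mc_ten C X (mc_ten C Y Z))
              \<and> iso C (mc_assoc C X Y Z)) \<and>
    (\<forall>f g h. mc_comp C (mc_assoc C (mc_cod C f) (mc_cod C g) (mc_cod C h)) (mc_tenm C (mc_tenm C f g) h)
             = mc_comp C (mc_tenm C f (mc_tenm C g h)) (mc_assoc C (mc_dom C f) (mc_dom C g) (mc_dom C h))) \<and>
    \<comment> \<open>left unitor I\<otimes>X \<rightarrow> X\<close>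
    (\<forall>X. hom C (mc_lunit C X) (mc_ten C (mc_unit C) X) X \<and> iso C (mc_lunit C X)) \<and>
    (\<forall>f. mc_comp C (mc_lunit C (mc_cod C f)) (mc_tenm C (mc_id C (mc_unit C)) f)
          = mc_comp C f (mc_lunit C (mc_dom C f))) \<and>
    \<comment> \<open>right unitor X\<otimes>I \<rightarrow> X\<close>
    (\<forall>X. hom C (mc_runit C X) (mc_ten C X (mc_unit C)) X \<and> iso C (mc_runit C X)) \<and>
    (\<forall>f. mc_comp C (mc_runit C (mc_cod C f)) (mc_tenm C f (mc_id C (mc_unit C)))
          = mc_comp C f (mc_runit C (mc_dom C f))) \<and>
    \<comment> \<open>pentagon\<close>
    (\<forall>W X Y Z. mc_comp C (mc_assoc C W X (mc_ten C Y Z)) (mc_assoc C (mc_ten C W X) Y Z)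
        = mc_comp C (mc_tenm C (mc_id C W) (mc_assoc C X Y Z))
            (mc_comp C (mc_assoc C W (mc_ten C X Y) Z) (mc_tenm C (mc_assoc C W X Y) (mc_id C Z)))) \<and>
    \<comment> \<open>triangle\<close>
    (\<forall>X Y. mc_comp C (mc_tenm C (mc_id C X) (mc_lunit C Y)) (mc_assoc C X (mc_unit C) Y)
        = mc_tenm C (mc_runit C X) (mc_id C Y))"

definition endofunctor :: "('o, 'a) moncat \<Rightarrow> ('o \<Rightarrow> 'o) \<Rightarrow> ('a \<Rightarrow> 'a) \<Rightarrow> bool" where
  "endofunctor C Go Gm \<longleftrightarrow>
    (\<forall>f. hom C (Gm f) (Go (mc_dom C f)) (Go (mc_cod C f))) \<and>
    (\<forall>X. Gm (mc_id C X) = mc_id C (Go X)) \<and>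
    (\<forall>f g. mc_cod C f = mc_dom C g \<longrightarrow> Gm (mc_comp C g f) = mc_comp C (Gm g) (Gm f))"

definition strength :: "('o, 'a) moncat \<Rightarrow> ('o \<Rightarrow> 'o) \<Rightarrow> ('a \<Rightarrow> 'a) \<Rightarrow> ('o \<Rightarrow> 'o \<Rightarrow> 'a) \<Rightarrow> bool" where
  "strength C Go Gm t \<longleftrightarrow>
    (\<forall>A B. hom C (t A B) (mc_ten C (Go A) B) (Go (mc_ten C A B))) \<and>
    (\<forall>f g. mc_comp C (t (mc_cod C f) (mc_cod C g)) (mc_tenm C (Gm f) g)
           = mc_comp C (Gm (mc_tenm C f g)) (t (mc_dom C f) (mc_dom C g))) \<and>
    (\<forall>A. mc_comp C (Gm (mc_runit C A)) (t A (mc_unit C)) = mc_runit C (Go A)) \<and>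
    (\<forall>A B D. mc_comp C (t A (mc_ten C B D)) (mc_assoc C (Go A) B D)
        = mc_comp C (Gm (mc_assoc C A B D))
            (mc_comp C (t (mc_ten C A B) D) (mc_tenm C (t A B) (mc_id C D))))"

text \<open>G^* (on objects Fo) is the algebraically free monad: each \<langle>Fo X, cons X\<rangle> is the free
  G-algebra on X with unit etaF X.\<close>
definition algebraically_free ::
  "('o, 'a) moncat \<Rightarrow> ('o \<Rightarrow> 'o) \<Rightarrow> ('a \<Rightarrow> 'a) \<Rightarrow> ('o \<Rightarrow> 'o) \<Rightarrow> ('o \<Rightarrow> 'a) \<Rightarrow> ('o \<Rightarrow> 'a) \<Rightarrow> bool" where
  "algebraically_free C Go Gm Fo cons etaF \<longleftrightarrow>
    (\<forall>X. hom C (cons X) (Go (Fo X)) (Fo X) \<and> hom C (etaF X) X (Fo X)) \<and>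
    (\<forall>X Y c f. hom C c (Go Y) Y \<and> hom C f X Y \<longrightarrow>
       (\<exists>!h. hom C h (Fo X) Y \<and> mc_comp C h (cons X) = mc_comp C c (Gm h)
             \<and> mc_comp C h (etaF X) = f))"

definition strongly_generated ::
  "('o, 'a) moncat \<Rightarrow> ('o \<Rightarrow> 'o) \<Rightarrow> ('a \<Rightarrow> 'a) \<Rightarrow> ('o \<Rightarrow> 'o \<Rightarrow> 'a) \<Rightarrow>
   ('o \<Rightarrow> 'o) \<Rightarrow> ('o \<Rightarrow> 'a) \<Rightarrow> ('o \<Rightarrow> 'a) \<Rightarrow> bool" where
  "strongly_generated C Go Gm tG Fo cons etaF \<longleftrightarrow>
    (\<forall>A B Y c f. hom C c (Go Y) Y \<and> hom C f (mc_ten C A B) Y \<longrightarrow>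
       (\<exists>!h. hom C h (mc_ten C (Fo A) B) Y
             \<and> mc_comp C h (mc_tenm C (etaF A) (mc_id C B)) = f
             \<and> mc_comp C h (mc_tenm C (cons A) (mc_id C B))
                 = mc_comp C c (mc_comp C (Gm h) (tG (Fo A) B))))"

definition free_ext ::
  "('o, 'a) moncat \<Rightarrow> ('o \<Rightarrow> 'o) \<Rightarrow> ('a \<Rightarrow> 'a) \<Rightarrow> ('o \<Rightarrow> 'o) \<Rightarrow> ('o \<Rightarrow> 'a) \<Rightarrow> ('o \<Rightarrow> 'a) \<Rightarrow>
   'o \<Rightarrow> 'o \<Rightarrow> 'a \<Rightarrow> 'a \<Rightarrow> 'a" where
  "free_ext C Go Gm Fo cons etaF X Y c f =
    (THE h. hom C h (Fo X) Y \<and> mc_comp C h (cons X) = mc_comp C c (Gm h)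
            \<and> mc_comp C h (etaF X) = f)"

definition sem ::
  "('o, 'a) moncat \<Rightarrow> ('o \<Rightarrow> 'o) \<Rightarrow> ('a \<Rightarrow> 'a) \<Rightarrow> ('o \<Rightarrow> 'o) \<Rightarrow> ('o \<Rightarrow> 'a) \<Rightarrow> ('o \<Rightarrow> 'a) \<Rightarrow>
   'o \<Rightarrow> 'a \<Rightarrow> 'a" where
  "sem C Go Gm Fo cons etaF A g = free_ext C Go Gm Fo cons etaF A A g (mc_id C A)"

definition free_map ::
  "('o, 'a) moncat \<Rightarrow> ('o \<Rightarrow> 'o) \<Rightarrow> ('a \<Rightarrow> 'a) \<Rightarrow> ('o \<Rightarrow> 'o) \<Rightarrow> ('o \<Rightarrow> 'a) \<Rightarrow> ('o \<Rightarrow> 'a) \<Rightarrow>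
   'a \<Rightarrow> 'a" where
  "free_map C Go Gm Fo cons etaF f =
    free_ext C Go Gm Fo cons etaF (mc_dom C f) (Fo (mc_cod C f)) (cons (mc_cod C f))
      (mc_comp C (etaF (mc_cod C f)) f)"

definition free_mult ::
  "('o, 'a) moncat \<Rightarrow> ('o \<Rightarrow> 'o) \<Rightarrow> ('a \<Rightarrow> 'a) \<Rightarrow> ('o \<Rightarrow> 'o) \<Rightarrow> ('o \<Rightarrow> 'a) \<Rightarrow> ('o \<Rightarrow> 'a) \<Rightarrow>
   'o \<Rightarrow> 'a" where
  "free_mult C Go Gm Fo cons etaF X = sem C Go Gm Fo cons etaF (Fo X) (cons X)"

definition hat ::
  "('o, 'a) moncat \<Rightarrow> ('o \<Rightarrow> 'o) \<Rightarrow> ('a \<Rightarrow> 'a) \<Rightarrow> ('o \<Rightarrow> 'o \<Rightarrow> 'a) \<Rightarrow>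
   ('o \<Rightarrow> 'o) \<Rightarrow> ('o \<Rightarrow> 'a) \<Rightarrow> ('o \<Rightarrow> 'a) \<Rightarrow> 'o \<Rightarrow> 'o \<Rightarrow> 'o \<Rightarrow> 'a \<Rightarrow> 'a \<Rightarrow> 'a" where
  "hat C Go Gm tG Fo cons etaF A B Y c f =
    (THE h. hom C h (mc_ten C (Fo A) B) Y
            \<and> mc_comp C h (mc_tenm C (etaF A) (mc_id C B)) = f
            \<and> mc_comp C h (mc_tenm C (cons A) (mc_id C B))
                = mc_comp C c (mc_comp C (Gm h) (tG (Fo A) B)))"

definition free_strength ::
  "('o, 'a) moncat \<Rightarrow> ('o \<Rightarrow> 'o) \<Rightarrow> ('a \<Rightarrow> 'a) \<Rightarrow> ('o \<Rightarrow> 'o \<Rightarrow> 'a) \<Rightarrow>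
   ('o \<Rightarrow> 'o) \<Rightarrow> ('o \<Rightarrow> 'a) \<Rightarrow> ('o \<Rightarrow> 'a) \<Rightarrow> 'o \<Rightarrow> 'o \<Rightarrow> 'a" where
  "free_strength C Go Gm tG Fo cons etaF A B =
    hat C Go Gm tG Fo cons etaF A B (Fo (mc_ten C A B)) (cons (mc_ten C A B)) (etaF (mc_ten C A B))"

definition is_monoid :: "('o, 'a) moncat \<Rightarrow> 'o \<Rightarrow> 'a \<Rightarrow> 'a \<Rightarrow> bool" where
  "is_monoid C A m u \<longleftrightarrow>
    hom C m (mc_ten C A A) A \<and> hom C u (mc_unit C) A \<and>
    mc_comp C m (mc_tenm C u (mc_id C A)) = mc_lunit C A \<and>
    mc_comp C m (mc_tenm C (mc_id C A) u) = mc_runit C A \<and>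
    mc_comp C m (mc_tenm C m (mc_id C A))
      = mc_comp C m (mc_comp C (mc_tenm C (mc_id C A) m) (mc_assoc C A A A))"

definition G_monoid ::
  "('o, 'a) moncat \<Rightarrow> ('o \<Rightarrow> 'o) \<Rightarrow> ('a \<Rightarrow> 'a) \<Rightarrow> ('o \<Rightarrow> 'o \<Rightarrow> 'a) \<Rightarrow> 'o \<Rightarrow> 'a \<Rightarrow> 'a \<Rightarrow> 'a \<Rightarrow> bool" where
  "G_monoid C Go Gm tG A g m u \<longleftrightarrow>
    hom C g (Go A) A \<and> is_monoid C A m u \<and>
    mc_comp C m (mc_tenm C g (mc_id C A)) = mc_comp C g (mc_comp C (Gm m) (tG A A))"

definition EM_monoid ::
  "('o, 'a) moncat \<Rightarrow> ('o \<Rightarrow> 'o) \<Rightarrow> ('a \<Rightarrow> 'a) \<Rightarrow> ('o \<Rightarrow> 'a) \<Rightarrow> ('o \<Rightarrow> 'a) \<Rightarrow> ('o \<Rightarrow> 'o \<Rightarrow> 'a) \<Rightarrow>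
   'o \<Rightarrow> 'a \<Rightarrow> 'a \<Rightarrow> 'a \<Rightarrow> bool" where
  "EM_monoid C Mo Mm eta mu tau A a m u \<longleftrightarrow>
    hom C a (Mo A) A \<and>
    mc_comp C a (Mm a) = mc_comp C a (mu A) \<and>
    mc_comp C a (eta A) = mc_id C A \<and>
    is_monoid C A m u \<and>
    mc_comp C m (mc_tenm C a (mc_id C A)) = mc_comp C a (mc_comp C (Mm m) (tau A A))"

end

theory Submission
  imports Defs
begin

locale setup9 =
  fixes C :: "('o, 'a) moncat"
    and Go :: "'o \<Rightarrow> 'o" and Gm :: "'a \<Rightarrow> 'a" and tG :: "'o \<Rightarrow> 'o \<Rightarrow> 'a"
    and Fo :: "'o \<Rightarrow> 'o" and cons :: "'o \<Rightarrow> 'a" and etaF :: "'o \<Rightarrow> 'a"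
  assumes MC: "monoidal_category C"
    and EF: "endofunctor C Go Gm"
    and ST: "strength C Go Gm tG"
    and AF: "algebraically_free C Go Gm Fo cons etaF"
    and SG: "strongly_generated C Go Gm tG Fo cons etaF"
begin

abbreviation cp (infixr "\<cdot>" 55) where "g \<cdot> f \<equiv> mc_comp C g f"
abbreviation "dm \<equiv> mc_dom C"
abbreviation "cd \<equiv> mc_cod C"
abbreviation "idm \<equiv> mc_id C"
abbreviation "tm \<equiv> mc_tenm C"
abbreviation "to \<equiv> mc_ten C"

lemma cat: "category C" using MC by (simp add: monoidal_category_def)

lemma dom_id[simp]: "dm (idm X) = X" and cod_id[simp]: "cd (idm X) = X"
  using cat by (auto simp: category_def hom_def)

lemma dom_comp[simp]: "cd f = dm g \<Longrightarrow> dm (g \<cdot> f) = dm f"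
  and cod_comp[simp]: "cd f = dm g \<Longrightarrow> cd (g \<cdot> f) = cd g"
  using cat by (auto simp: category_def hom_def)

lemma comp_id_r[simp]: "dm f = X \<Longrightarrow> f \<cdot> idm X = f"
  and comp_id_l[simp]: "cd f = Y \<Longrightarrow> idm Y \<cdot> f = f"
  using cat by (auto simp: category_def)

lemma assoc: "cd f = dm g \<Longrightarrow> cd g = dm h \<Longrightarrow> (h \<cdot> g) \<cdot> f = h \<cdot> (g \<cdot> f)"
  using cat by (auto simp: category_def)

lemma dom_ten[simp]: "dm (tm f g) = to (dm f) (dm g)"
  and cod_ten[simp]: "cd (tm f g) = to (cd f) (cd g)"
  using MC by (auto simp: monoidal_category_def hom_def)

lemma ten_id[simp]: "tm (idm X) (idm Y) = idm (to X Y)"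
  using MC by (auto simp: monoidal_category_def)

lemma interchange: "cd f = dm f' \<Longrightarrow> cd g = dm g' \<Longrightarrow> tm (f' \<cdot> f) (g' \<cdot> g) = tm f' g' \<cdot> tm f g"
  using MC by (auto simp: monoidal_category_def)

lemma dom_Gm[simp]: "dm (Gm f) = Go (dm f)" and cod_Gm[simp]: "cd (Gm f) = Go (cd f)"
  using EF by (auto simp: endofunctor_def hom_def)

lemma Gm_comp: "cd f = dm g \<Longrightarrow> Gm (g \<cdot> f) = Gm g \<cdot> Gm f"
  using EF by (auto simp: endofunctor_def)

lemma dom_tG[simp]: "dm (tG X Y) = to (Go X) Y" and cod_tG[simp]: "cd (tG X Y) = Go (to X Y)"
  using ST by (auto simp: strength_def hom_def)

lemma tG_nat: "tG (cd f) (cd g) \<cdot> tm (Gm f) g = Gm (tm f g) \<cdot> tG (dm f) (dm g)"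
  using ST by (auto simp: strength_def)

lemma dom_cons[simp]: "dm (cons X) = Go (Fo X)" and cod_cons[simp]: "cd (cons X) = Fo X"
  and dom_eta[simp]: "dm (etaF X) = X" and cod_eta[simp]: "cd (etaF X) = Fo X"
  using AF by (auto simp: algebraically_free_def hom_def)

lemma fe:
  assumes "dm c = Go Y" "cd c = Y" "dm f = X" "cd f = Y"
  shows "dm (free_ext C Go Gm Fo cons etaF X Y c f) = Fo X \<and> cd (free_ext C Go Gm Fo cons etaF X Y c f) = Y
    \<and> free_ext C Go Gm Fo cons etaF X Y c f \<cdot> cons X = c \<cdot> Gm (free_ext C Go Gm Fo cons etaF X Y c f)
    \<and> free_ext C Go Gm Fo cons etaF X Y c f \<cdot> etaF X = f"
proof -
  have "\<exists>!h. hom C h (Fo X) Y \<and> h \<cdot> cons X = c \<cdot> Gm h \<and> h \<cdot> etaF X = f"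
    using AF assms unfolding algebraically_free_def hom_def by blast
  from theI'[OF this] show ?thesis unfolding free_ext_def hom_def by blast
qed

lemma fe_unique:
  assumes "dm c = Go Y" "cd c = Y" "dm f = X" "cd f = Y"
    and "dm h = Fo X" "cd h = Y" "h \<cdot> cons X = c \<cdot> Gm h" "h \<cdot> etaF X = f"
    and "dm h' = Fo X" "cd h' = Y" "h' \<cdot> cons X = c \<cdot> Gm h'" "h' \<cdot> etaF X = f"
  shows "h = h'"
proof -
  have "\<exists>!h. hom C h (Fo X) Y \<and> h \<cdot> cons X = c \<cdot> Gm h \<and> h \<cdot> etaF X = f"
    using AF assms(1-4) unfolding algebraically_free_def hom_def by blast
  thus ?thesis using assms(5-) unfolding hom_def by blast
qed

lemma ht:
  assumes "dm c = Go Y" "cd c = Y" "dm f = to X B" "cd f = Y"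
  shows "dm (hat C Go Gm tG Fo cons etaF X B Y c f) = to (Fo X) B \<and> cd (hat C Go Gm tG Fo cons etaF X B Y c f) = Y
    \<and> hat C Go Gm tG Fo cons etaF X B Y c f \<cdot> tm (etaF X) (idm B) = f
    \<and> hat C Go Gm tG Fo cons etaF X B Y c f \<cdot> tm (cons X) (idm B)
       = c \<cdot> Gm (hat C Go Gm tG Fo cons etaF X B Y c f) \<cdot> tG (Fo X) B"
proof -
  have "\<exists>!h. hom C h (to (Fo X) B) Y \<and> h \<cdot> tm (etaF X) (idm B) = f
      \<and> h \<cdot> tm (cons X) (idm B) = c \<cdot> Gm h \<cdot> tG (Fo X) B"
    using SG assms unfolding strongly_generated_def hom_def by blast
  from theI'[OF this] show ?thesis unfolding hat_def hom_def by blast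
qed

lemma ht_unique:
  assumes "dm c = Go Y" "cd c = Y" "dm f = to X B" "cd f = Y"
    and "dm h = to (Fo X) B" "cd h = Y" "h \<cdot> tm (etaF X) (idm B) = f"
        "h \<cdot> tm (cons X) (idm B) = c \<cdot> Gm h \<cdot> tG (Fo X) B"
    and "dm h' = to (Fo X) B" "cd h' = Y" "h' \<cdot> tm (etaF X) (idm B) = f"
        "h' \<cdot> tm (cons X) (idm B) = c \<cdot> Gm h' \<cdot> tG (Fo X) B"
  shows "h = h'"
proof -
  have "\<exists>!h. hom C h (to (Fo X) B) Y \<and> h \<cdot> tm (etaF X) (idm B) = f
      \<and> h \<cdot> tm (cons X) (idm B) = c \<cdot> Gm h \<cdot> tG (Fo X) B"
    using SG assms(1-4) unfolding strongly_generated_def hom_def by blast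
  thus ?thesis using assms(5-) unfolding hom_def by blast
qed

lemma main:
  assumes GM: "G_monoid C Go Gm tG A g m u"
  shows "EM_monoid C Fo (free_map C Go Gm Fo cons etaF) etaF (free_mult C Go Gm Fo cons etaF)
           (free_strength C Go Gm tG Fo cons etaF) A (sem C Go Gm Fo cons etaF A g) m u"
proof -
  have g: "dm g = Go A" "cd g = A" using GM by (auto simp: G_monoid_def hom_def)
  have mon: "is_monoid C A m u" using GM by (simp add: G_monoid_def)
  have mm: "dm m = to A A" "cd m = A" using mon by (auto simp: is_monoid_def hom_def)
  have gm: "m \<cdot> tm g (idm A) = g \<cdot> Gm m \<cdot> tG A A" using GM by (simp add: G_monoid_def)
  define s where "s = sem C Go Gm Fo cons etaF A g"
  have sp: "dm s = Fo A" "cd s = A" "s \<cdot> cons A = g \<cdot> Gm s" "s \<cdot> etaF A = idm A"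
    using fe[of g A "idm A" A] g unfolding s_def sem_def by auto
  define Fs where "Fs = free_map C Go Gm Fo cons etaF s"
  have Fsp: "dm Fs = Fo (Fo A)" "cd Fs = Fo A" "Fs \<cdot> cons (Fo A) = cons A \<cdot> Gm Fs"
      "Fs \<cdot> etaF (Fo A) = etaF A \<cdot> s"
    using fe[of "cons A" "Fo A" "etaF A \<cdot> s" "Fo A"] sp unfolding Fs_def free_map_def by auto
  define mu where "mu = free_mult C Go Gm Fo cons etaF A"
  have mup: "dm mu = Fo (Fo A)" "cd mu = Fo A" "mu \<cdot> cons (Fo A) = cons A \<cdot> Gm mu"
      "mu \<cdot> etaF (Fo A) = idm (Fo A)"
    using fe[of "cons A" "Fo A" "idm (Fo A)" "Fo A"] unfolding mu_def free_mult_def sem_def by auto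
  define Fm where "Fm = free_map C Go Gm Fo cons etaF m"
  have Fmp: "dm Fm = Fo (to A A)" "cd Fm = Fo A" "Fm \<cdot> cons (to A A) = cons A \<cdot> Gm Fm"
      "Fm \<cdot> etaF (to A A) = etaF A \<cdot> m"
    using fe[of "cons A" "Fo A" "etaF A \<cdot> m" "to A A"] mm unfolding Fm_def free_map_def by auto
  define t where "t = free_strength C Go Gm tG Fo cons etaF A A"
  have tp: "dm t = to (Fo A) A" "cd t = Fo (to A A)" "t \<cdot> tm (etaF A) (idm A) = etaF (to A A)"
     "t \<cdot> tm (cons A) (idm A) = cons (to A A) \<cdot> Gm t \<cdot> tG (Fo A) A"
    using ht[of "cons (to A A)" "Fo (to A A)" "etaF (to A A)" A A] unfolding t_def free_strength_def
    by auto
  have em1: "s \<cdot> Fs = s \<cdot> mu"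
  proof (rule fe_unique[of g A s "Fo A"])
    show "(s \<cdot> Fs) \<cdot> cons (Fo A) = g \<cdot> Gm (s \<cdot> Fs)"
    proof -
      have "(s \<cdot> Fs) \<cdot> cons (Fo A) = s \<cdot> (cons A \<cdot> Gm Fs)" using sp Fsp by (simp add: assoc)
      also have "\<dots> = (g \<cdot> Gm s) \<cdot> Gm Fs" using sp Fsp by (simp add: assoc[symmetric])
      also have "\<dots> = g \<cdot> Gm (s \<cdot> Fs)" using sp Fsp g by (simp add: assoc Gm_comp)
      finally show ?thesis .
    qed
    show "(s \<cdot> Fs) \<cdot> etaF (Fo A) = s"
    proof -
      have "(s \<cdot> Fs) \<cdot> etaF (Fo A) = s \<cdot> (etaF A \<cdot> s)" using sp Fsp by (simp add: assoc)
      also have "\<dots> = (s \<cdot> etaF A) \<cdot> s" by (rule assoc[symmetric]) (simp_all add: sp)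
      also have "\<dots> = s" using sp by simp
      finally show ?thesis .
    qed
    show "(s \<cdot> mu) \<cdot> cons (Fo A) = g \<cdot> Gm (s \<cdot> mu)"
    proof -
      have "(s \<cdot> mu) \<cdot> cons (Fo A) = s \<cdot> (cons A \<cdot> Gm mu)" using sp mup by (simp add: assoc)
      also have "\<dots> = (g \<cdot> Gm s) \<cdot> Gm mu" using sp mup by (simp add: assoc[symmetric])
      also have "\<dots> = g \<cdot> Gm (s \<cdot> mu)" using sp mup g by (simp add: assoc Gm_comp)
      finally show ?thesis .
    qed
    show "(s \<cdot> mu) \<cdot> etaF (Fo A) = s"
      using sp mup g by (simp add: assoc)
  qed (use sp Fsp mup g in auto)
  have idd: "idm A \<cdot> idm A = idm A" by simp
  have em2: "m \<cdot> tm s (idm A) = s \<cdot> Fm \<cdot> t"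
  proof (rule ht_unique[of g A m A A])
    show "(m \<cdot> tm s (idm A)) \<cdot> tm (etaF A) (idm A) = m"
    proof -
      have i: "tm s (idm A) \<cdot> tm (etaF A) (idm A) = tm (s \<cdot> etaF A) (idm A \<cdot> idm A)"
        by (rule interchange[symmetric]) (simp_all add: sp)
      have "(m \<cdot> tm s (idm A)) \<cdot> tm (etaF A) (idm A) = m \<cdot> (tm s (idm A) \<cdot> tm (etaF A) (idm A))"
        by (rule assoc) (simp_all add: sp mm)
      also have "\<dots> = m" unfolding i using sp mm by simp
      finally show ?thesis .
    qed
    show "(m \<cdot> tm s (idm A)) \<cdot> tm (cons A) (idm A) = g \<cdot> Gm (m \<cdot> tm s (idm A)) \<cdot> tG (Fo A) A"
    proof -
      have i: "tm s (idm A) \<cdot> tm (cons A) (idm A) = tm (s \<cdot> cons A) (idm A \<cdot> idm A)"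
        by (rule interchange[symmetric]) (simp_all add: sp)
      have i2: "tm g (idm A) \<cdot> tm (Gm s) (idm A) = tm (g \<cdot> Gm s) (idm A \<cdot> idm A)"
        by (rule interchange[symmetric]) (simp_all add: sp g)
      have "(m \<cdot> tm s (idm A)) \<cdot> tm (cons A) (idm A) = m \<cdot> (tm s (idm A) \<cdot> tm (cons A) (idm A))"
        by (rule assoc) (simp_all add: sp mm)
      also have "\<dots> = m \<cdot> (tm g (idm A) \<cdot> tm (Gm s) (idm A))" unfolding i i2 sp by simp
      also have "\<dots> = (m \<cdot> tm g (idm A)) \<cdot> tm (Gm s) (idm A)"
        by (rule assoc[symmetric]) (simp_all add: sp mm g)
      also have "\<dots> = g \<cdot> Gm m \<cdot> (tG A A \<cdot> tm (Gm s) (idm A))"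
        using gm sp mm g by (simp add: assoc)
      also have "tG A A \<cdot> tm (Gm s) (idm A) = Gm (tm s (idm A)) \<cdot> tG (Fo A) A"
        using tG_nat[of s "idm A"] sp by simp
      also have "g \<cdot> Gm m \<cdot> Gm (tm s (idm A)) \<cdot> tG (Fo A) A = g \<cdot> Gm (m \<cdot> tm s (idm A)) \<cdot> tG (Fo A) A"
        using sp mm g by (simp add: assoc Gm_comp)
      finally show ?thesis .
    qed
    show "(s \<cdot> Fm \<cdot> t) \<cdot> tm (etaF A) (idm A) = m"
    proof -
      have "(s \<cdot> Fm \<cdot> t) \<cdot> tm (etaF A) (idm A) = s \<cdot> (etaF A \<cdot> m)"
        using sp Fmp tp by (simp add: assoc)
      also have "\<dots> = (s \<cdot> etaF A) \<cdot> m" by (rule assoc[symmetric]) (simp_all add: sp mm)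
      also have "\<dots> = m" using sp mm by simp
      finally show ?thesis .
    qed
    show "(s \<cdot> Fm \<cdot> t) \<cdot> tm (cons A) (idm A) = g \<cdot> Gm (s \<cdot> Fm \<cdot> t) \<cdot> tG (Fo A) A"
    proof -
      have Fmx: "Fm \<cdot> cons (to A A) \<cdot> x = cons A \<cdot> Gm Fm \<cdot> x" if "cd x = Go (Fo (to A A))" for x
      proof -
        have "Fm \<cdot> cons (to A A) \<cdot> x = (Fm \<cdot> cons (to A A)) \<cdot> x"
          by (rule assoc[symmetric]) (simp_all add: Fmp that)
        also have "\<dots> = (cons A \<cdot> Gm Fm) \<cdot> x" using Fmp by simp
        also have "\<dots> = cons A \<cdot> Gm Fm \<cdot> x" by (rule assoc) (simp_all add: Fmp that)
        finally show ?thesis .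
      qed
      have sx: "s \<cdot> cons A \<cdot> x = g \<cdot> Gm s \<cdot> x" if "cd x = Go (Fo A)" for x
      proof -
        have "s \<cdot> cons A \<cdot> x = (s \<cdot> cons A) \<cdot> x"
          by (rule assoc[symmetric]) (simp_all add: sp that)
        also have "\<dots> = (g \<cdot> Gm s) \<cdot> x" using sp by simp
        also have "\<dots> = g \<cdot> Gm s \<cdot> x" by (rule assoc) (simp_all add: sp g that)
        finally show ?thesis .
      qed
      have "(s \<cdot> Fm \<cdot> t) \<cdot> tm (cons A) (idm A) = s \<cdot> Fm \<cdot> t \<cdot> tm (cons A) (idm A)"
        using sp Fmp tp by (simp add: assoc)
      also have "\<dots> = s \<cdot> Fm \<cdot> cons (to A A) \<cdot> Gm t \<cdot> tG (Fo A) A" using tp by simp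
      also have "\<dots> = s \<cdot> cons A \<cdot> Gm Fm \<cdot> Gm t \<cdot> tG (Fo A) A" using Fmx tp by simp
      also have "\<dots> = g \<cdot> Gm s \<cdot> Gm Fm \<cdot> Gm t \<cdot> tG (Fo A) A" using sx Fmp tp by simp
      also have "\<dots> = g \<cdot> Gm (s \<cdot> Fm \<cdot> t) \<cdot> tG (Fo A) A"
        using sp Fmp tp g by (simp add: assoc Gm_comp)
      finally show ?thesis .
    qed
  qed (use sp Fmp tp mm g in auto)
  show ?thesis
    unfolding EM_monoid_def s_def[symmetric] Fs_def[symmetric] mu_def[symmetric]
      Fm_def[symmetric] t_def[symmetric]
    using sp em1 em2 mon by (simp add: hom_def)
qed

end


theorem lemma9:
  fixes C :: "('o, 'a) moncat"
    and Go :: "'o \<Rightarrow> 'o" and Gm :: "'a \<Rightarrow> 'a" and tG :: "'o \<Rightarrow> 'o \<Rightarrow> 'a"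
    and Fo :: "'o \<Rightarrow> 'o" and cons :: "'o \<Rightarrow> 'a" and etaF :: "'o \<Rightarrow> 'a"
    and A :: 'o and g m u :: 'a
  assumes "monoidal_category C"
    and "endofunctor C Go Gm"
    and "strength C Go Gm tG"
    and "algebraically_free C Go Gm Fo cons etaF"
    and "strongly_generated C Go Gm tG Fo cons etaF"
    and "G_monoid C Go Gm tG A g m u"
  shows "EM_monoid C Fo (free_map C Go Gm Fo cons etaF) etaF (free_mult C Go Gm Fo cons etaF)
           (free_strength C Go Gm tG Fo cons etaF) A (sem C Go Gm Fo cons etaF A g) m u"
  using setup9.main[of C Go Gm tG Fo cons etaF A g m u] assms unfolding setup9_def by blast

end
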